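(* Let $G=G_+G_-$ be a unique factorization of a finite group $G$, and let $R\in H(G;G_+,G_-)\otimes H(G;G_+,G_-)$ be invertible and positive, with $R^{-1}$ also positive. Then there exist a subset $\mathcal R\subset G\times G$ and a function $r:\mathcal R\to\mathbb R_{>0}$ such that (1) the restriction of the map $G\times G\to G_+\times G_+$, $(g,h)\mapsto(g_+,h_+)$, to $\mathcal R$ is a bijection onto $G_+\times G_+$; and (2) $R=\sum_{(g,h)\in\mathcal R} r(g,h)\,\{g\}\otimes\{h\}$.
   Context: A unique factorization $G=G_+G_-$ consists of subgroups $G_+,G_-$ such that every $g\in G$ is uniquely $g=g_+g_-$ with $g_+\in G_+$, $g_-\in G_-$. For $u\in G_+$, $x\in G_-$ define ${}^u x\in G_-$, $u^x\in G_+$, ${}^x u\in G_+$, $x^u\in G_-$ by $ux=({}^u x)(u^x)$ and $xu=({}^x u)(x^u)$. $H(G;G_+,G_-)$ is the complex vector space with basis $\{g\}$, $g\in G$, and Hopf algebra structure: $\{g\}\{h\}=\delta_{g_+^{\,g_-},\,h_+}\{g h_-\}$; unit $1=\sum_{u\in G_+}\{u\}$; $\Delta\{g\}=\sum_{h\in G_+}\{g_+h^{-1}({}^{h}g_-)\}\otimes\{h g_-\}$; $\varepsilon\{g\}=\delta_{g_+,e}$; $S\{g\}=\{g^{-1}\}$. An element of $H(G;G_+,G_-)\otimes H(G;G_+,G_-)$ is positive if it is a linear combination of the $\{g\}\otimes\{h\}$ with non-negative real coefficients. *)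

theory Defs
  imports Complex_Main "HOL-Algebra.Group"
begin

definition unique_factorization :: "('a, 'b) monoid_scheme \<Rightarrow> 'a set \<Rightarrow> 'a set \<Rightarrow> bool" where
  "unique_factorization G Gp Gm \<longleftrightarrow> subgroup Gp G \<and> subgroup Gm G \<and>
     (\<forall>g\<in>carrier G. \<exists>!p. fst p \<in> Gp \<and> snd p \<in> Gm \<and> g = fst p \<otimes>\<^bsub>G\<^esub> snd p)"

definition uf_plus :: "('a, 'b) monoid_scheme \<Rightarrow> 'a set \<Rightarrow> 'a set \<Rightarrow> 'a \<Rightarrow> 'a" where
  "uf_plus G Gp Gm g = (THE u. u \<in> Gp \<and> (\<exists>x\<in>Gm. g = u \<otimes>\<^bsub>G\<^esub> x))"

definition uf_minus :: "('a, 'b) monoid_scheme \<Rightarrow> 'a set \<Rightarrow> 'a set \<Rightarrow> 'a \<Rightarrow> 'a" where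
  "uf_minus G Gp Gm g = (THE x. x \<in> Gm \<and> (\<exists>u\<in>Gp. g = u \<otimes>\<^bsub>G\<^esub> x))"

text \<open>For u in G_+ and x in G_-: u x = (^u x)(u^x) with ^u x in G_-, u^x in G_+;
  uf_ract gives u^x.\<close>
definition uf_ract :: "('a, 'b) monoid_scheme \<Rightarrow> 'a set \<Rightarrow> 'a set \<Rightarrow> 'a \<Rightarrow> 'a \<Rightarrow> 'a" where
  "uf_ract G Gp Gm u x = (THE v. v \<in> Gp \<and> (\<exists>y\<in>Gm. u \<otimes>\<^bsub>G\<^esub> x = y \<otimes>\<^bsub>G\<^esub> v))"

text \<open>Elements of H \<otimes> H are coefficient functions on G \<times> G w.r.t. the basis {g}\<otimes>{h}.\<close>
definition ht_elem :: "('a, 'b) monoid_scheme \<Rightarrow> ('a \<times> 'a \<Rightarrow> complex) \<Rightarrow> bool" where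
  "ht_elem G A \<longleftrightarrow> (\<forall>p. p \<notin> carrier G \<times> carrier G \<longrightarrow> A p = 0)"

text \<open>Product in H(G;G_+,G_-) \<otimes> H(G;G_+,G_-), extended bilinearly from
  ({g1}\<otimes>{g2})({h1}\<otimes>{h2}) = {g1}{h1} \<otimes> {g2}{h2}, with
  {g}{h} = \<delta>_{g_+^{g_-}, h_+} {g h_-}.\<close>
definition ht_mult :: "('a, 'b) monoid_scheme \<Rightarrow> 'a set \<Rightarrow> 'a set \<Rightarrow>
    ('a \<times> 'a \<Rightarrow> complex) \<Rightarrow> ('a \<times> 'a \<Rightarrow> complex) \<Rightarrow> ('a \<times> 'a \<Rightarrow> complex)" where
  "ht_mult G Gp Gm A B = (\<lambda>(k1, k2).
     \<Sum>g1\<in>carrier G. \<Sum>g2\<in>carrier G. \<Sum>h1\<in>carrier G. \<Sum>h2\<in>carrier G.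
       (if uf_ract G Gp Gm (uf_plus G Gp Gm g1) (uf_minus G Gp Gm g1) = uf_plus G Gp Gm h1
           \<and> g1 \<otimes>\<^bsub>G\<^esub> uf_minus G Gp Gm h1 = k1
           \<and> uf_ract G Gp Gm (uf_plus G Gp Gm g2) (uf_minus G Gp Gm g2) = uf_plus G Gp Gm h2
           \<and> g2 \<otimes>\<^bsub>G\<^esub> uf_minus G Gp Gm h2 = k2
        then A (g1, g2) * B (h1, h2) else 0))"

text \<open>Unit 1 \<otimes> 1 = (\<Sum>_{u\<in>G_+}{u}) \<otimes> (\<Sum>_{v\<in>G_+}{v}).\<close>
definition ht_one :: "'a set \<Rightarrow> ('a \<times> 'a \<Rightarrow> complex)" where
  "ht_one Gp = (\<lambda>(g, h). if g \<in> Gp \<and> h \<in> Gp then 1 else 0)"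

definition ht_invertible :: "('a, 'b) monoid_scheme \<Rightarrow> 'a set \<Rightarrow> 'a set \<Rightarrow> ('a \<times> 'a \<Rightarrow> complex) \<Rightarrow> bool" where
  "ht_invertible G Gp Gm A \<longleftrightarrow> (\<exists>B. ht_elem G B \<and> ht_mult G Gp Gm A B = ht_one Gp \<and> ht_mult G Gp Gm B A = ht_one Gp)"

definition ht_positive :: "('a \<times> 'a \<Rightarrow> complex) \<Rightarrow> bool" where
  "ht_positive A \<longleftrightarrow> (\<forall>p. A p \<in> \<real> \<and> 0 \<le> Re (A p))"

end

theory Submission
  imports Defs
begin

locale ufact = group G for G (structure) +
  fixes Gp Gm :: "'a set"
  assumes uf: "unique_factorization G Gp Gm"
begin

lemma subs: "subgroup Gp G" "subgroup Gm G"
  using uf unfolding unique_factorization_def by simp_all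

lemma Gp_c: "u \<in> Gp \<Longrightarrow> u \<in> carrier G"
  by (rule subgroup.mem_carrier[OF subs(1)])
lemma Gm_c: "u \<in> Gm \<Longrightarrow> u \<in> carrier G"
  by (rule subgroup.mem_carrier[OF subs(2)])

lemma ufx:
  assumes "g \<in> carrier G"
  shows "\<exists>!p. fst p \<in> Gp \<and> snd p \<in> Gm \<and> g = fst p \<otimes> snd p"
proof -
  have "\<forall>g\<in>carrier G. \<exists>!p. fst p \<in> Gp \<and> snd p \<in> Gm \<and> g = fst p \<otimes> snd p"
    using uf unfolding unique_factorization_def by (rule conjunct2[THEN conjunct2])
  then show ?thesis using assms by (rule bspec[where x=g])
qed

lemma uniq:
  assumes "u \<in> Gp" "u' \<in> Gp" "x \<in> Gm" "x' \<in> Gm" "u \<otimes> x = u' \<otimes> x'"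
  shows "u = u' \<and> x = x'"
proof -
  have c: "u \<otimes> x \<in> carrier G" using assms by (simp add: Gp_c Gm_c)
  define q where "q = (THE p. fst p \<in> Gp \<and> snd p \<in> Gm \<and> u \<otimes> x = fst p \<otimes> snd p)"
  have q: "y = q" if "fst y \<in> Gp \<and> snd y \<in> Gm \<and> u \<otimes> x = fst y \<otimes> snd y" for y
    unfolding q_def by (rule the1_equality[OF ufx[OF c] that, symmetric])
  have "fst (u, x) \<in> Gp \<and> snd (u, x) \<in> Gm \<and> u \<otimes> x = fst (u, x) \<otimes> snd (u, x)"
    using assms by simp
  then have 1: "(u, x) = q" by (rule q)
  have "fst (u', x') \<in> Gp \<and> snd (u', x') \<in> Gm \<and> u \<otimes> x = fst (u', x') \<otimes> snd (u', x')"
    using assms by simp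
  then have 2: "(u', x') = q" by (rule q)
  have "(u, x) = (u', x')" using 1 2 by (rule trans[OF _ sym])
  then show ?thesis by simp
qed

lemma fact: "g \<in> carrier G \<Longrightarrow> \<exists>u\<in>Gp. \<exists>x\<in>Gm. g = u \<otimes> x"
proof -
  assume g: "g \<in> carrier G"
  obtain p where "fst p \<in> Gp \<and> snd p \<in> Gm \<and> g = fst p \<otimes> snd p"
    using ex1_implies_ex[OF ufx[OF g]] by (elim exE)
  then show ?thesis by blast
qed

lemma PM_prod:
  assumes "u \<in> Gp" "x \<in> Gm"
  shows "uf_plus G Gp Gm (u \<otimes> x) = u \<and> uf_minus G Gp Gm (u \<otimes> x) = x"
proof
  show "uf_plus G Gp Gm (u \<otimes> x) = u" unfolding uf_plus_def
    by (rule the_equality) (use assms uniq in blast)+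
  show "uf_minus G Gp Gm (u \<otimes> x) = x" unfolding uf_minus_def
    by (rule the_equality) (use assms uniq in blast)+
qed

lemma PM:
  assumes "g \<in> carrier G"
  shows "uf_plus G Gp Gm g \<in> Gp \<and> uf_minus G Gp Gm g \<in> Gm \<and> uf_plus G Gp Gm g \<otimes> uf_minus G Gp Gm g = g"
proof -
  obtain u x where ux: "u \<in> Gp" "x \<in> Gm" "g = u \<otimes> x" using fact[OF assms] by blast
  show ?thesis using PM_prod[OF ux(1,2)] ux by simp
qed

lemma P_Gp: "u \<in> Gp \<Longrightarrow> uf_plus G Gp Gm u = u \<and> uf_minus G Gp Gm u = \<one>"
proof -
  assume u: "u \<in> Gp"
  have "\<one> \<in> Gm" by (rule subgroup.one_closed[OF subs(2)])
  moreover have "u \<otimes> \<one> = u" using u Gp_c by simp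
  ultimately show ?thesis using PM_prod[OF u, of \<one>] by simp
qed

lemma ract_char:
  assumes "u \<in> Gp" "x \<in> Gm" "v \<in> Gp" "y \<in> Gm" "u \<otimes> x = y \<otimes> v"
  shows "uf_ract G Gp Gm u x = v"
  unfolding uf_ract_def
proof (rule the_equality)
  show "v \<in> Gp \<and> (\<exists>y\<in>Gm. u \<otimes> x = y \<otimes> v)" using assms by blast
next
  fix v' assume "v' \<in> Gp \<and> (\<exists>y\<in>Gm. u \<otimes> x = y \<otimes> v')"
  then obtain y' where v': "v' \<in> Gp" "y' \<in> Gm" "y \<otimes> v = y' \<otimes> v'" using assms by auto
  have cc: "v \<in> carrier G" "y \<in> carrier G" "v' \<in> carrier G" "y' \<in> carrier G"
    using v' assms Gp_c Gm_c by auto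
  have "inv (y \<otimes> v) = inv (y' \<otimes> v')" using v' by simp
  then have "inv v \<otimes> inv y = inv v' \<otimes> inv y'"
    using cc by (simp add: inv_mult_group)
  moreover have "inv v \<in> Gp" "inv v' \<in> Gp" "inv y \<in> Gm" "inv y' \<in> Gm"
    using v' assms by (simp_all add: subgroup.m_inv_closed[OF subs(1)] subgroup.m_inv_closed[OF subs(2)])
  ultimately have "inv v = inv v'" using uniq by blast
  then have "inv (inv v) = inv (inv v')" by simp
  then show "v' = v" using cc by simp
qed

lemma ract_ex:
  assumes "u \<in> Gp" "x \<in> Gm"
  shows "\<exists>y\<in>Gm. \<exists>v\<in>Gp. u \<otimes> x = y \<otimes> v"
proof -
  have c: "inv (u \<otimes> x) \<in> carrier G" using assms by (simp add: Gp_c Gm_c)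
  obtain p m where pm: "p \<in> Gp" "m \<in> Gm" "inv (u \<otimes> x) = p \<otimes> m" using fact[OF c] by blast
  have cc: "u \<in> carrier G" "x \<in> carrier G" "p \<in> carrier G" "m \<in> carrier G"
    using pm assms Gp_c Gm_c by auto
  have "u \<otimes> x = inv (inv (u \<otimes> x))" using cc by simp
  also have "\<dots> = inv (p \<otimes> m)" using pm by simp
  also have "\<dots> = inv m \<otimes> inv p" using cc by (simp add: inv_mult_group)
  finally have "u \<otimes> x = inv m \<otimes> inv p" .
  moreover have "inv m \<in> Gm" "inv p \<in> Gp" using pm by (simp_all add: subgroup.m_inv_closed[OF subs(1)] subgroup.m_inv_closed[OF subs(2)])
  ultimately show ?thesis by blast
qed

lemma ract_in: "u \<in> Gp \<Longrightarrow> x \<in> Gm \<Longrightarrow> uf_ract G Gp Gm u x \<in> Gp"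
proof -
  assume a: "u \<in> Gp" "x \<in> Gm"
  obtain y v where yv: "y \<in> Gm" "v \<in> Gp" "u \<otimes> x = y \<otimes> v" using ract_ex[OF a] by blast
  show ?thesis using ract_char[OF a yv(2) yv(1) yv(3)] yv(2) by simp
qed

lemma ract_back:
  assumes "u \<in> Gp" "x \<in> Gm"
  shows "uf_ract G Gp Gm (uf_ract G Gp Gm u x) (inv x) = u"
proof -
  obtain y v where yv: "y \<in> Gm" "v \<in> Gp" "u \<otimes> x = y \<otimes> v" using ract_ex[OF assms] by blast
  have r: "uf_ract G Gp Gm u x = v" using ract_char[OF assms yv(2) yv(1) yv(3)] .
  have c: "u \<in> carrier G" "x \<in> carrier G" "y \<in> carrier G" "v \<in> carrier G"
    using assms yv Gp_c Gm_c by auto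
  have "inv y \<otimes> u = inv y \<otimes> (u \<otimes> (x \<otimes> inv x))" using c by simp
  also have "\<dots> = inv y \<otimes> ((u \<otimes> x) \<otimes> inv x)" using c by (simp add: m_assoc)
  also have "\<dots> = inv y \<otimes> ((y \<otimes> v) \<otimes> inv x)" using yv by simp
  also have "\<dots> = (inv y \<otimes> y) \<otimes> (v \<otimes> inv x)" using c by (simp add: m_assoc[symmetric])
  also have "\<dots> = v \<otimes> inv x" using c by simp
  finally have e: "v \<otimes> inv x = inv y \<otimes> u" by simp
  have "inv x \<in> Gm" "inv y \<in> Gm" using assms yv by (simp_all add: subgroup.m_inv_closed[OF subs(1)] subgroup.m_inv_closed[OF subs(2)])
  then have "uf_ract G Gp Gm v (inv x) = u" using ract_char[OF yv(2) _ assms(1) _ e] by blast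
  then show ?thesis using r by simp
qed

lemma comp_src:
  assumes "g \<in> carrier G" "h \<in> carrier G" "a \<in> Gp" "g \<otimes> uf_minus G Gp Gm h = a"
  shows "uf_plus G Gp Gm g = a \<and> uf_minus G Gp Gm h = inv (uf_minus G Gp Gm g)"
proof -
  note g = PM[OF assms(1)] and h = PM[OF assms(2)]
  have mc: "uf_minus G Gp Gm g \<in> carrier G" "uf_minus G Gp Gm h \<in> carrier G"
    "uf_plus G Gp Gm g \<in> carrier G"
    using g h Gp_c Gm_c by auto
  have "uf_plus G Gp Gm g \<otimes> (uf_minus G Gp Gm g \<otimes> uf_minus G Gp Gm h) =
     (uf_plus G Gp Gm g \<otimes> uf_minus G Gp Gm g) \<otimes> uf_minus G Gp Gm h"
    using mc by (simp add: m_assoc)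
  also have "\<dots> = a \<otimes> \<one>" using g assms Gp_c by simp
  finally have "uf_plus G Gp Gm g \<otimes> (uf_minus G Gp Gm g \<otimes> uf_minus G Gp Gm h) = a \<otimes> \<one>" .
  moreover have "uf_minus G Gp Gm g \<otimes> uf_minus G Gp Gm h \<in> Gm"
    using g h by (simp add: subgroup.m_closed[OF subs(2)])
  moreover have "\<one> \<in> Gm" by (rule subgroup.one_closed[OF subs(2)])
  ultimately have e: "uf_plus G Gp Gm g = a" "uf_minus G Gp Gm g \<otimes> uf_minus G Gp Gm h = \<one>"
    using uniq g assms(3) by blast+
  have "inv (uf_minus G Gp Gm g) = uf_minus G Gp Gm h"
    using inv_equality[OF _ mc(1) mc(2)] inv_comm[OF e(2) mc(1) mc(2)] by blast
  then show ?thesis using e by simp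
qed

lemma comp_uniq:
  assumes "g0 \<in> carrier G" "h \<in> carrier G" "g' \<in> carrier G" "a \<in> Gp"
    "uf_ract G Gp Gm (uf_plus G Gp Gm g0) (uf_minus G Gp Gm g0) = uf_plus G Gp Gm h"
    "g0 \<otimes> uf_minus G Gp Gm h = a" "uf_plus G Gp Gm g' = a"
  shows "uf_ract G Gp Gm (uf_plus G Gp Gm h) (uf_minus G Gp Gm h) = uf_plus G Gp Gm g'"
    and "h \<otimes> uf_minus G Gp Gm g' \<in> Gp \<Longrightarrow> g' = g0"
proof -
  note g0 = PM[OF assms(1)] and h = PM[OF assms(2)] and g' = PM[OF assms(3)]
  note cs = comp_src[OF assms(1,2,4,6)]
  show "uf_ract G Gp Gm (uf_plus G Gp Gm h) (uf_minus G Gp Gm h) = uf_plus G Gp Gm g'"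
    using ract_back[of "uf_plus G Gp Gm g0" "uf_minus G Gp Gm g0"] g0 cs assms(5,7) by simp
  assume k: "h \<otimes> uf_minus G Gp Gm g' \<in> Gp"
  have mc: "uf_minus G Gp Gm h \<in> carrier G" "uf_minus G Gp Gm g' \<in> carrier G"
    "uf_plus G Gp Gm h \<in> carrier G" "uf_minus G Gp Gm g0 \<in> carrier G"
    using g0 g' h Gp_c Gm_c by auto
  have "uf_plus G Gp Gm h \<otimes> (uf_minus G Gp Gm h \<otimes> uf_minus G Gp Gm g') =
     (uf_plus G Gp Gm h \<otimes> uf_minus G Gp Gm h) \<otimes> uf_minus G Gp Gm g'"
    using mc by (simp add: m_assoc)
  also have "\<dots> = (h \<otimes> uf_minus G Gp Gm g') \<otimes> \<one>" using h mc assms(2) by simp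
  finally have "uf_plus G Gp Gm h \<otimes> (uf_minus G Gp Gm h \<otimes> uf_minus G Gp Gm g') = (h \<otimes> uf_minus G Gp Gm g') \<otimes> \<one>" .
  moreover have "uf_minus G Gp Gm h \<otimes> uf_minus G Gp Gm g' \<in> Gm"
    using g' h by (simp add: subgroup.m_closed[OF subs(2)])
  moreover have "\<one> \<in> Gm" by (rule subgroup.one_closed[OF subs(2)])
  ultimately have e: "uf_minus G Gp Gm h \<otimes> uf_minus G Gp Gm g' = \<one>"
    using uniq h k by blast
  have "inv (uf_minus G Gp Gm g0) \<otimes> uf_minus G Gp Gm g' = \<one>" using e cs by simp
  then have "uf_minus G Gp Gm g' = uf_minus G Gp Gm g0"
    using mc inv_equality[of "uf_minus G Gp Gm g'" "inv (uf_minus G Gp Gm g0)"]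
    by (simp add: inv_comm)
  then show "g' = g0" using g' g0 cs assms(7) by metis
qed

end

lemma if_zero: "\<not> (c \<and> (A::complex) \<noteq> 0 \<and> B \<noteq> 0) \<Longrightarrow> (if c then A * B else 0) = 0"
  by auto

lemma re_sum_nonneg: "(\<And>x. x \<in> A \<Longrightarrow> Re (F x) \<ge> 0) \<Longrightarrow> Re (sum F A) \<ge> 0"
  by (simp add: Re_sum sum_nonneg)

lemma re_sum_pos: "finite A \<Longrightarrow> x0 \<in> A \<Longrightarrow> (\<And>x. x \<in> A \<Longrightarrow> Re (F x) \<ge> 0) \<Longrightarrow> Re (F x0) > 0
   \<Longrightarrow> Re (sum F A) > 0"
  by (simp add: Re_sum sum_pos2)

lemma re_sum4_pos:
  assumes "finite C" "a \<in> C" "b \<in> C" "c \<in> C" "d \<in> C" "Re (F a b c d) > 0"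
    "\<And>w x y z. Re (F w x y z) \<ge> 0"
  shows "Re (\<Sum>w\<in>C. \<Sum>x\<in>C. \<Sum>y\<in>C. \<Sum>z\<in>C. F w x y z) > 0"
  apply (rule re_sum_pos[OF assms(1,2)])
   apply (intro re_sum_nonneg assms(7))
  apply (rule re_sum_pos[OF assms(1,3)])
   apply (intro re_sum_nonneg assms(7))
  apply (rule re_sum_pos[OF assms(1,4)])
   apply (intro re_sum_nonneg assms(7))
  apply (rule re_sum_pos[OF assms(1,5)])
   apply (intro re_sum_nonneg assms(7))
  apply (rule assms(6))
  done

lemma pos_real: "ht_positive A \<Longrightarrow> A p = complex_of_real (Re (A p)) \<and> Re (A p) \<ge> 0"
proof -
  assume a: "ht_positive A"
  then have "A p \<in> \<real> \<and> Re (A p) \<ge> 0" unfolding ht_positive_def by (rule spec)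
  then show ?thesis by (simp add: complex_is_Real_iff complex_eq_iff)
qed

lemma term_nonneg: "ht_positive A \<Longrightarrow> ht_positive B \<Longrightarrow>
  Re (if c then A x * B y else 0) \<ge> 0"
proof -
  assume a: "ht_positive A" "ht_positive B"
  have "A x * B y = complex_of_real (Re (A x) * Re (B y))"
    using pos_real[OF a(1), of x] pos_real[OF a(2), of y] by (metis of_real_mult)
  moreover have "Re (A x) * Re (B y) \<ge> 0"
    using pos_real[OF a(1), of x] pos_real[OF a(2), of y] by simp
  ultimately show ?thesis by simp
qed

lemma term_pos: "ht_positive A \<Longrightarrow> ht_positive B \<Longrightarrow> c \<Longrightarrow> A x \<noteq> 0 \<Longrightarrow> B y \<noteq> 0 \<Longrightarrow>
  Re (if c then A x * B y else 0) > 0"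
proof -
  assume a: "ht_positive A" "ht_positive B" and c: c and n: "A x \<noteq> 0" "B y \<noteq> 0"
  have e: "A x * B y = complex_of_real (Re (A x) * Re (B y))"
    using pos_real[OF a(1), of x] pos_real[OF a(2), of y] by (metis of_real_mult)
  have "Re (A x) \<noteq> 0" using n(1) pos_real[OF a(1), of x] by force
  moreover have "Re (B y) \<noteq> 0" using n(2) pos_real[OF a(2), of y] by force
  ultimately have "Re (A x) * Re (B y) > 0"
    using pos_real[OF a(1), of x] pos_real[OF a(2), of y] by simp
  then show ?thesis using e c by simp
qed

theorem proposition2:
  fixes G :: "('a, 'b) monoid_scheme" and Gp Gm :: "'a set" and R :: "'a \<times> 'a \<Rightarrow> complex"
  assumes "group G" and "finite (carrier G)"
    and "unique_factorization G Gp Gm"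
    and "ht_elem G R" and "ht_positive R"
    and "ht_invertible G Gp Gm R"
    and "\<And>S. ht_elem G S \<Longrightarrow> ht_mult G Gp Gm R S = ht_one Gp \<Longrightarrow> ht_mult G Gp Gm S R = ht_one Gp
           \<Longrightarrow> ht_positive S"
  shows "\<exists>\<R> r. \<R> \<subseteq> carrier G \<times> carrier G \<and> (\<forall>p\<in>\<R>. (r p :: real) > 0)
     \<and> bij_betw (\<lambda>(g, h). (uf_plus G Gp Gm g, uf_plus G Gp Gm h)) \<R> (Gp \<times> Gp)
     \<and> (\<forall>p. R p = (if p \<in> \<R> then complex_of_real (r p) else 0))"
proof -
  interpret ufact G Gp Gm using assms(1,3) by (simp add: ufact_def ufact_axioms_def)
  let ?C = "carrier G"
  let ?P = "uf_plus G Gp Gm" and ?M = "uf_minus G Gp Gm"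
  let ?T = "\<lambda>g. uf_ract G Gp Gm (uf_plus G Gp Gm g) (uf_minus G Gp Gm g)"
  obtain S where S: "ht_elem G S" "ht_mult G Gp Gm R S = ht_one Gp" "ht_mult G Gp Gm S R = ht_one Gp"
    using assms(6) unfolding ht_invertible_def by blast
  have Spos: "ht_positive S" using assms(7) S by blast
  have Rc: "R p \<noteq> 0 \<Longrightarrow> p \<in> ?C \<times> ?C" for p using assms(4) unfolding ht_elem_def by blast
  have ex: "\<exists>g1 g2 h1 h2. g1 \<in> ?C \<and> g2 \<in> ?C \<and> h1 \<in> ?C \<and> h2 \<in> ?C \<and>
     ?T g1 = ?P h1 \<and> g1 \<otimes>\<^bsub>G\<^esub> ?M h1 = a1 \<and> ?T g2 = ?P h2 \<and> g2 \<otimes>\<^bsub>G\<^esub> ?M h2 = a2 \<and>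
     R (g1, g2) \<noteq> 0 \<and> S (h1, h2) \<noteq> 0" if a: "a1 \<in> Gp" "a2 \<in> Gp" for a1 a2
  proof (rule ccontr)
    assume n: "\<not> ?thesis"
    have z: "(if ?T g1 = ?P h1 \<and> g1 \<otimes>\<^bsub>G\<^esub> ?M h1 = a1 \<and> ?T g2 = ?P h2 \<and> g2 \<otimes>\<^bsub>G\<^esub> ?M h2 = a2
        then R (g1, g2) * S (h1, h2) else 0) = 0"
      if "g1 \<in> ?C" "g2 \<in> ?C" "h1 \<in> ?C" "h2 \<in> ?C" for g1 g2 h1 h2
    proof -
      have "\<not> ((?T g1 = ?P h1 \<and> g1 \<otimes>\<^bsub>G\<^esub> ?M h1 = a1 \<and> ?T g2 = ?P h2 \<and> g2 \<otimes>\<^bsub>G\<^esub> ?M h2 = a2)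
         \<and> R (g1, g2) \<noteq> 0 \<and> S (h1, h2) \<noteq> 0)" using n that by blast
      then show ?thesis by (rule if_zero)
    qed
    have "ht_mult G Gp Gm R S (a1, a2) = 0"
      unfolding ht_mult_def prod.case
      by (intro sum.neutral ballI z)
    moreover have "ht_mult G Gp Gm R S (a1, a2) = 1" using S(2) a by (simp add: ht_one_def)
    ultimately show False by simp
  qed
  have un: "g1' = g1 \<and> g2' = g2"
    if r: "R (g1, g2) \<noteq> 0" "R (g1', g2') \<noteq> 0" and e: "?P g1 = ?P g1'" "?P g2 = ?P g2'"
    for g1 g2 g1' g2'
  proof -
    have c: "g1 \<in> ?C" "g2 \<in> ?C" "g1' \<in> ?C" "g2' \<in> ?C" using Rc r by auto
    have a: "?P g1 \<in> Gp" "?P g2 \<in> Gp" using PM c by auto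
    have main: "x1 = y1 \<and> x2 = y2" if x: "R (x1, x2) \<noteq> 0" "?P x1 = ?P g1" "?P x2 = ?P g2"
      and y: "y1 \<in> ?C" "y2 \<in> ?C" "h1 \<in> ?C" "h2 \<in> ?C"
      "?T y1 = ?P h1" "y1 \<otimes>\<^bsub>G\<^esub> ?M h1 = ?P g1" "?T y2 = ?P h2" "y2 \<otimes>\<^bsub>G\<^esub> ?M h2 = ?P g2"
      "S (h1, h2) \<noteq> 0" for x1 x2 y1 y2 h1 h2
    proof -
      have xc: "x1 \<in> ?C" "x2 \<in> ?C" using Rc x by auto
      note u1 = comp_uniq[OF y(1) y(3) xc(1) a(1) y(5) y(6) x(2)]
      note u2 = comp_uniq[OF y(2) y(4) xc(2) a(2) y(7) y(8) x(3)]
      let ?k = "(h1 \<otimes>\<^bsub>G\<^esub> ?M x1, h2 \<otimes>\<^bsub>G\<^esub> ?M x2)"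
      have "Re (ht_mult G Gp Gm S R ?k) > 0"
        unfolding ht_mult_def split
        apply (rule re_sum4_pos[OF assms(2) y(3) y(4) xc(1) xc(2)])
         apply (rule term_pos[OF Spos assms(5)])
        using u1(1) u2(1) x(1) y(9) apply auto[3]
        apply (rule term_nonneg[OF Spos assms(5)])
        done
      then have "ht_one Gp ?k \<noteq> 0" using S(3) by auto
      then have "h1 \<otimes>\<^bsub>G\<^esub> ?M x1 \<in> Gp" "h2 \<otimes>\<^bsub>G\<^esub> ?M x2 \<in> Gp"
        unfolding ht_one_def by (auto split: if_splits)
      then show ?thesis using u1(2) u2(2) by blast
    qed
    obtain y1 y2 h1 h2 where y: "y1 \<in> ?C" "y2 \<in> ?C" "h1 \<in> ?C" "h2 \<in> ?C"
      "?T y1 = ?P h1" "y1 \<otimes>\<^bsub>G\<^esub> ?M h1 = ?P g1" "?T y2 = ?P h2" "y2 \<otimes>\<^bsub>G\<^esub> ?M h2 = ?P g2"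
      "S (h1, h2) \<noteq> 0"
      using ex[OF a] by blast
    have "g1 = y1 \<and> g2 = y2" using main[OF r(1) refl refl y] .
    moreover have "g1' = y1 \<and> g2' = y2" using main[OF r(2) e[symmetric] y] .
    ultimately show ?thesis by simp
  qed
  define RR where "RR = {p. R p \<noteq> 0}"
  define r where "r p = Re (R p)" for p
  show ?thesis
  proof (intro exI conjI)
    show "RR \<subseteq> ?C \<times> ?C" using Rc RR_def by blast
    show "\<forall>p\<in>RR. r p > 0"
      using pos_real[OF assms(5)] unfolding RR_def r_def
      by (metis mem_Collect_eq of_real_0 order_le_less)
    show "\<forall>p. R p = (if p \<in> RR then complex_of_real (r p) else 0)"
      using pos_real[OF assms(5)] unfolding RR_def r_def by auto
    show "bij_betw (\<lambda>(g, h). (?P g, ?P h)) RR (Gp \<times> Gp)"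
      unfolding bij_betw_def
    proof (intro conjI)
      show "inj_on (\<lambda>(g, h). (?P g, ?P h)) RR"
        unfolding inj_on_def RR_def using un by fastforce
      show "(\<lambda>(g, h). (?P g, ?P h)) ` RR = Gp \<times> Gp"
      proof
        show "(\<lambda>(g, h). (?P g, ?P h)) ` RR \<subseteq> Gp \<times> Gp"
          unfolding RR_def using Rc PM by fastforce
        show "Gp \<times> Gp \<subseteq> (\<lambda>(g, h). (?P g, ?P h)) ` RR"
        proof
          fix q assume "q \<in> Gp \<times> Gp"
          then obtain a1 a2 where q: "q = (a1, a2)" "a1 \<in> Gp" "a2 \<in> Gp" by blast
          then obtain g1 g2 h1 h2 where w: "g1 \<in> ?C" "g2 \<in> ?C" "h1 \<in> ?C" "h2 \<in> ?C"
            "g1 \<otimes>\<^bsub>G\<^esub> ?M h1 = a1" "g2 \<otimes>\<^bsub>G\<^esub> ?M h2 = a2" "R (g1, g2) \<noteq> 0"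
            using ex[of a1 a2] by blast
          have "?P g1 = a1" "?P g2 = a2" using comp_src w q by blast+
          then show "q \<in> (\<lambda>(g, h). (?P g, ?P h)) ` RR"
            using w q RR_def by force
        qed
      qed
    qed
  qed
qed

end
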